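(* Let $a,q$ be complex numbers, let $F(z)=\sum_{n=0}^{\infty}a_nz^n\in\mathbb{C}[[z]]$ and for $k\ge0$ let $F_k(z)=\sum_{i=0}^ka_iz^i$ be its $k$-th truncation. Suppose that $$\frac{F(z)}{1-az}=\sum_{n=0}^{\infty}\frac{c_nz^{n}}{1-azq^n}$$ in $\mathbb{C}[[z]]$ with coefficients $c_n$ independent of $z$. Then $c_0=a_0$ and for $n\ge1$, $$c_n=\sum_{k=0}^{n-1}g_{n-k}(q)\,q^{(n-k)k}\,[z^{n}]\Big\{\frac{F(z)-F_k(z)}{1-az}\Big\},$$ where the polynomials $g_n(q)$ ($n\ge1$) are defined recursively by $$g_n(q)=1-\sum_{i=1}^{n-1}g_{n-i}(q)\,q^{(n-i)i}.$$
   Context: $[z^m]\{f\}$ denotes the coefficient of $z^m$ in the formal power series $f$; $1/(1-az)$ and $1/(1-azq^n)$ are expanded as geometric series in $z$. Empty sums are $0$ (so $g_1(q)=1$). *)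

theory Defs
  imports Complex_Main "HOL-Computational_Algebra.Formal_Power_Series"
begin

definition fps_trunc :: "nat \<Rightarrow> 'a::zero fps \<Rightarrow> 'a fps" where
  "fps_trunc k F = Abs_fps (\<lambda>i. if i \<le> k then fps_nth F i else 0)"

function gpoly :: "nat \<Rightarrow> complex \<Rightarrow> complex" where
  "gpoly n q = 1 - (\<Sum>i\<in>{1..<n}. gpoly (n - i) q * q ^ ((n - i) * i))"
  by auto
termination
  by (relation "measure fst") auto

end

theory Submission
  imports Defs
begin

declare gpoly.simps [simp del]

lemma inv_geo: "inverse (1 - fps_const (b::complex) * fps_X) = Abs_fps (\<lambda>n. b^n)"
proof (rule fps_inverse_unique, rule fps_ext)
  fix n
  show "fps_nth ((1 - fps_const b * fps_X) * Abs_fps (\<lambda>n. b^n)) n = fps_nth (1::complex fps) n"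
    by (cases n) (simp_all add: algebra_simps mult.assoc)
qed

lemma coeff_div: "fps_nth (G * inverse (1 - fps_const (b::complex) * fps_X)) n = (\<Sum>i\<le>n. fps_nth G i * b^(n-i))"
  by (simp add: inv_geo fps_mult_nth atLeast0AtMost)

lemma gsum:
  assumes "N \<ge> 1"
  shows "(\<Sum>i<N. gpoly (N-i) q * q^((N-i)*i)) = 1"
proof -
  have "{..<N} = insert 0 {1..<N}" using assms by auto
  hence "(\<Sum>i<N. gpoly (N-i) q * q^((N-i)*i)) = gpoly N q + (\<Sum>i\<in>{1..<N}. gpoly (N-i) q * q^((N-i)*i))"
    by simp
  also have "\<dots> = 1" by (subst (1) gpoly.simps) simp
  finally show ?thesis .
qed

lemma term_nth:
  "fps_nth (fps_const (c::complex) * fps_X ^ n * inverse (1 - fps_const (a * q ^ n) * fps_X)) m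
     = (if m < n then 0 else c * a^(m-n) * q^(n*(m-n)))"
  by (simp add: mult.assoc fps_X_power_mult_nth inv_geo power_mult_distrib power_mult)

theorem corollary2p4:
  fixes a q :: complex and F :: "complex fps" and c :: "nat \<Rightarrow> complex"
  assumes "(\<lambda>n. fps_const (c n) * fps_X ^ n * inverse (1 - fps_const (a * q ^ n) * fps_X))
             sums (F * inverse (1 - fps_const a * fps_X))"
  shows "c 0 = fps_nth F 0 \<and>
    (\<forall>n\<ge>1. c n = (\<Sum>k<n. gpoly (n - k) q * q ^ ((n - k) * k) *
       fps_nth ((F - fps_trunc k F) * inverse (1 - fps_const a * fps_X)) n))"
proof -
  define e where "e m = fps_nth (F * inverse (1 - fps_const a * fps_X)) m" for m
  have E: "e m = (\<Sum>n\<le>m. c n * a^(m-n) * q^(n*(m-n)))" for m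
  proof -
    let ?f = "\<lambda>n. fps_const (c n) * fps_X ^ n * inverse (1 - fps_const (a * q ^ n) * fps_X)"
    from assms have "(\<lambda>N. \<Sum>n<N. ?f n) \<longlonglongrightarrow> F * inverse (1 - fps_const a * fps_X)"
      by (simp add: sums_def)
    hence "eventually (\<lambda>N. fps_nth (\<Sum>n<N. ?f n) m = e m) sequentially"
      unfolding tendsto_fps_iff e_def by blast
    then obtain N0 where N0: "\<And>N. N \<ge> N0 \<Longrightarrow> fps_nth (\<Sum>n<N. ?f n) m = e m"
      by (auto simp: eventually_sequentially)
    define N where "N = max N0 (Suc m)"
    have "e m = fps_nth (\<Sum>n<N. ?f n) m" using N0[of N] by (simp add: N_def)
    also have "\<dots> = (\<Sum>n<N. if m < n then 0 else c n * a^(m-n) * q^(n*(m-n)))"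
      by (simp add: fps_sum_nth term_nth)
    also have "\<dots> = (\<Sum>n\<in>{n\<in>{..<N}. n \<le> m}. c n * a^(m-n) * q^(n*(m-n)))"
      by (subst sum.inter_filter) (auto intro!: sum.cong)
    also have "{n\<in>{..<N}. n \<le> m} = {..m}" by (auto simp: N_def)
    finally show ?thesis .
  qed
  have D: "fps_nth ((F - fps_trunc k F) * inverse (1 - fps_const a * fps_X)) n
      = e n - a^(n-k) * e k" if "k \<le> n" for k n
  proof -
    have "fps_nth ((F - fps_trunc k F) * inverse (1 - fps_const a * fps_X)) n
       = (\<Sum>i\<le>n. (fps_nth F i - (if i \<le> k then fps_nth F i else 0)) * a^(n-i))"
      by (simp add: coeff_div fps_trunc_def)
    also have "\<dots> = e n - (\<Sum>i\<le>n. if i \<le> k then fps_nth F i * a^(n-i) else 0)"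
      unfolding e_def coeff_div sum_subtractf[symmetric] by (rule sum.cong) (auto simp: algebra_simps)
    also have "(\<Sum>i\<le>n. if i \<le> k then fps_nth F i * a^(n-i) else 0) = (\<Sum>i\<le>k. fps_nth F i * a^(n-i))"
      using that by (subst sum.inter_filter[symmetric]) (auto intro!: sum.cong)
    also have "\<dots> = a^(n-k) * e k"
      unfolding e_def coeff_div sum_distrib_left
    proof (rule sum.cong)
      fix i assume "i \<in> {..k}"
      hence "n - i = (n-k) + (k-i)" using that by auto
      thus "fps_nth F i * a^(n-i) = a^(n-k) * (fps_nth F i * a^(k-i))"
        by (simp add: power_add)
    qed simp
    finally show ?thesis .
  qed
  define w where "w n k = gpoly (n - k) q * q ^ ((n - k) * k)" for n k
  define h where "h n k j = q^(j*(n-j)) - (if j \<le> k then q^(j*(k-j)) else 0)" for n k j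
  have W: "(\<Sum>k<n. w n k) = 1" if "n \<ge> 1" for n
    unfolding w_def using gsum[OF that] .
  have expo: "(n - (j + i)) * (j + i) + j * i = j * (n - j) + (n - j - i) * i"
    if "i < n - j" for n j i :: nat
  proof -
    define r where "r = n - j - i"
    have nr: "n = j + i + r" using that r_def by simp
    show ?thesis unfolding nr by (simp add: algebra_simps)
  qed
  have H: "(\<Sum>k<n. w n k * h n k j) = (if j = n then 1 else 0)" if "j \<le> n" "n \<ge> 1" for n j
  proof -
    have "(\<Sum>k<n. w n k * h n k j) = q^(j*(n-j)) * (\<Sum>k<n. w n k)
        - (\<Sum>k<n. if j \<le> k then w n k * q^(j*(k-j)) else 0)"
      unfolding h_def sum_distrib_left sum_subtractf[symmetric]
      by (rule sum.cong) (auto simp: algebra_simps)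
    also have "(\<Sum>k<n. if j \<le> k then w n k * q^(j*(k-j)) else 0) = (\<Sum>k\<in>{j..<n}. w n k * q^(j*(k-j)))"
      by (subst sum.inter_filter[symmetric]) (auto intro!: sum.cong)
    also have "\<dots> = (\<Sum>i\<in>{0..<n-j}. w n (j+i) * q^(j*i))"
      by (subst sum.atLeastLessThan_shift_0) simp
    also have "\<dots> = (\<Sum>i<n-j. q^(j*(n-j)) * (gpoly (n-j-i) q * q^((n-j-i)*i)))"
    proof (rule sum.cong)
      fix i assume "i \<in> {..<n-j}"
      hence "i < n - j" by simp
      hence "q ^ ((n - (j + i)) * (j + i)) * q^(j*i) = q^(j*(n-j)) * q^((n-j-i)*i)"
        using expo[of i n j] by (simp add: power_add[symmetric])
      thus "w n (j+i) * q^(j*i) = q^(j*(n-j)) * (gpoly (n-j-i) q * q^((n-j-i)*i))"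
        unfolding w_def by (simp add: diff_diff_add)
    qed auto
    finally have X: "(\<Sum>k<n. w n k * h n k j) = q^(j*(n-j)) * (\<Sum>k<n. w n k)
        - q^(j*(n-j)) * (\<Sum>i<n-j. gpoly (n-j-i) q * q^((n-j-i)*i))"
      by (simp add: sum_distrib_left)
    show ?thesis
    proof (cases "j = n")
      case True
      thus ?thesis using X W[OF that(2)] by simp
    next
      case False
      hence "n - j \<ge> 1" using that by simp
      thus ?thesis using X W[OF that(2)] gsum[of "n-j" q] False by simp
    qed
  qed
  have eh: "e n - a^(n-k) * e k = (\<Sum>j\<le>n. c j * a^(n-j) * h n k j)" if "k < n" for n k
  proof -
    have "a^(n-k) * e k = (\<Sum>j\<le>k. c j * a^(n-j) * q^(j*(k-j)))"
      unfolding E sum_distrib_left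
    proof (rule sum.cong)
      fix j assume "j \<in> {..k}"
      hence "n - j = (n-k) + (k-j)" using that by auto
      thus "a ^ (n - k) * (c j * a ^ (k - j) * q ^ (j * (k - j))) = c j * a^(n-j) * q^(j*(k-j))"
        by (simp add: power_add)
    qed simp
    also have "\<dots> = (\<Sum>j\<le>n. if j \<le> k then c j * a^(n-j) * q^(j*(k-j)) else 0)"
      using that by (subst sum.inter_filter[symmetric]) (auto intro!: sum.cong)
    finally have A: "a^(n-k) * e k = (\<Sum>j\<le>n. if j \<le> k then c j * a^(n-j) * q^(j*(k-j)) else 0)" .
    show ?thesis
      unfolding A E[of n] h_def sum_subtractf[symmetric] by (rule sum.cong) (auto simp: algebra_simps)
  qed
  have main: "c n = (\<Sum>k<n. gpoly (n - k) q * q ^ ((n - k) * k) *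
       fps_nth ((F - fps_trunc k F) * inverse (1 - fps_const a * fps_X)) n)" if "n \<ge> 1" for n
  proof -
    have "(\<Sum>k<n. gpoly (n - k) q * q ^ ((n - k) * k) *
       fps_nth ((F - fps_trunc k F) * inverse (1 - fps_const a * fps_X)) n)
       = (\<Sum>k<n. w n k * (\<Sum>j\<le>n. c j * a^(n-j) * h n k j))"
      by (rule sum.cong) (auto simp: D eh w_def)
    also have "\<dots> = (\<Sum>j\<le>n. c j * a^(n-j) * (\<Sum>k<n. w n k * h n k j))"
      unfolding sum_distrib_left by (subst sum.swap) (auto intro!: sum.cong simp: algebra_simps)
    also have "\<dots> = (\<Sum>j\<le>n. if j = n then c j * a^(n-j) else 0)"
    proof (rule sum.cong)
      fix j assume "j \<in> {..n}"
      thus "c j * a^(n-j) * (\<Sum>k<n. w n k * h n k j) = (if j = n then c j * a^(n-j) else 0)"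
        using H[of j n] that by simp
    qed simp
    also have "\<dots> = c n" by simp
    finally show ?thesis by simp
  qed
  have "c 0 = fps_nth F 0"
    using E[of 0] by (simp add: e_def coeff_div)
  thus ?thesis using main by blast
qed

end
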